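(* Let $A\in\mathbb{C}^{n\times n}$, $B\in\mathbb{C}^{n\times m}$, $C\in\mathbb{C}^{p\times n}$, and suppose $A^*Z_j=C^*h_j+Z_jH_{-j}$ with $Z_j\in\mathbb{C}^{n\times N}$, $h_j\in\mathbb{C}^{p\times N}$, $H_{-j}\in\mathbb{C}^{N\times N}$ such that $0=H_{-j}+H_{-j}^*-(Z_j^*BB^*Z_j+h_j^*h_j)$; put $R_j=C^*+Z_jh_j^*$. Let $\tilde Z\in\mathbb{C}^{n\times k}$, $U_1\in\mathbb{C}^{p\times k}$, $D\in\mathbb{C}^{k\times k}$, $U_2=h_j^*U_1$ satisfy $A^*\tilde Z=C^*U_1+Z_jU_2+\tilde ZD$ (e.g. $\tilde Z=(A^*-\mu I_n)^{-1}R_j$, $U_1=I_p$, $D=\mu I_p$). Let $Y_{12}\in\mathbb{C}^{N\times k}$ solve $Y_{12}D+H_{-j}^*Y_{12}-Z_j^*BB^*\tilde Z=0$, let $Y_{22}\in\mathbb{C}^{k\times k}$ be Hermitian and solve $$0=Y_{12}^*U_2+Y_{22}D+U_2^*Y_{12}+D^*Y_{22}-\tilde Z^*BB^*\tilde Z-U_1^*U_1,$$ and assume $Y_{22}-Y_{12}^*Y_{12}$ is positive definite with Cholesky factorization $G_{22}^*G_{22}$. Define $\hat U_1=(-h_jY_{12}+U_1)G_{22}^{-1}$, $\hat U_2=(-H_{-j}Y_{12}+U_2+Y_{12}D)G_{22}^{-1}$, $\hat D=G_{22}DG_{22}^{-1}$, $\hat Z=(-Z_jY_{12}+\tilde Z)G_{22}^{-1}$,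 $Z_{j+1}=\begin{bmatrix}Z_j&\hat Z\end{bmatrix}$, $h_{j+1}=\begin{bmatrix}h_j&\hat U_1\end{bmatrix}$, $H_{-(j+1)}=\begin{bmatrix}H_{-j}&\hat U_2\\0&\hat D\end{bmatrix}$. Then $A^*Z_{j+1}=C^*h_{j+1}+Z_{j+1}H_{-(j+1)}$, $0=H_{-(j+1)}+H_{-(j+1)}^*-(Z_{j+1}^*BB^*Z_{j+1}+h_{j+1}^*h_{j+1})$, and $R_{j+1}:=C^*+Z_{j+1}h_{j+1}^*=R_j+\hat Z\hat U_1^*$ satisfies $\mathcal{R}(Z_{j+1}Z_{j+1}^* )=R_{j+1}R_{j+1}^*$.
   Context: $\mathcal{R}(X)=A^*X+XA+C^*C-XBB^*X$ is the Riccati residual. The hypothesis on $(Z_j,h_j,H_{-j})$ states that the identity matrix solves the small Lyapunov equation $0=\tilde YH_{-j}+H_{-j}^*\tilde Y-(Z_j^*BB^*Z_j+h_j^*h_j)$. *)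

theory Defs
  imports "Jordan_Normal_Form.Schur_Decomposition"
begin

definition hcat :: "'a::zero mat \<Rightarrow> 'a mat \<Rightarrow> 'a mat" where
  "hcat X Y = four_block_mat X Y (0\<^sub>m 0 (dim_col X)) (0\<^sub>m 0 (dim_col Y))"

definition pos_def_mat :: "complex mat \<Rightarrow> bool" where
  "pos_def_mat M \<longleftrightarrow> square_mat M \<and> mat_adjoint M = M \<and>
     (\<forall>v \<in> carrier_vec (dim_row M). v \<noteq> 0\<^sub>v (dim_row M) \<longrightarrow>
        Re (conjugate v \<bullet> (M *\<^sub>v v)) > 0)"

definition cholesky_factor :: "complex mat \<Rightarrow> complex mat \<Rightarrow> bool" where
  "cholesky_factor G M \<longleftrightarrow> G \<in> carrier_mat (dim_row M) (dim_row M) \<and> upper_triangular G \<and>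
     (\<forall>i < dim_row G. Im (G $$ (i,i)) = 0 \<and> Re (G $$ (i,i)) > 0) \<and>
     mat_adjoint G * G = M"

definition riccati_res :: "complex mat \<Rightarrow> complex mat \<Rightarrow> complex mat \<Rightarrow> complex mat \<Rightarrow> complex mat" where
  "riccati_res A B C X =
     mat_adjoint A * X + X * A + mat_adjoint C * C - X * B * mat_adjoint B * X"

end

theory Submission
  imports Defs
begin



lemma adj_dims[simp]: "dim_row (mat_adjoint A) = dim_col A" "dim_col (mat_adjoint A) = dim_row A"
  unfolding mat_adjoint_def by auto

lemma adj_index: "i < dim_col A \<Longrightarrow> j < dim_row A \<Longrightarrow> mat_adjoint A $$ (i,j) = conjugate (A $$ (j,i))"
  unfolding mat_adjoint_def by (auto simp: mat_of_rows_def)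

lemma adj_carrier[simp]: "mat_adjoint A \<in> carrier_mat c r \<longleftrightarrow> A \<in> carrier_mat r c"
  unfolding carrier_mat_def by auto

lemma adj_adj[simp]: "mat_adjoint (mat_adjoint (A::complex mat)) = A"
  by (rule eq_matI, auto simp: adj_index)

lemma adj_add: "dim_row A = dim_row B \<Longrightarrow> dim_col A = dim_col B \<Longrightarrow>
  mat_adjoint (A + B) = mat_adjoint A + mat_adjoint (B::complex mat)"
  by (rule eq_matI, auto simp: adj_index)

lemma adj_uminus[simp]: "mat_adjoint (- A) = - mat_adjoint (A::complex mat)"
  by (rule eq_matI, auto simp: adj_index)

lemma adj_zero[simp]: "mat_adjoint (0\<^sub>m r c :: complex mat) = 0\<^sub>m c r"
  by (rule eq_matI, auto simp: adj_index)

lemma adj_one[simp]: "mat_adjoint (1\<^sub>m n :: complex mat) = 1\<^sub>m n"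
  by (rule eq_matI, auto simp: adj_index)

lemma adj_mult: "dim_col A = dim_row B \<Longrightarrow>
  mat_adjoint (A * B) = mat_adjoint B * mat_adjoint (A::complex mat)"
  apply (rule eq_matI)
    apply (auto simp: adj_index scalar_prod_def)
  apply (rule sum.cong)
   apply (auto simp: adj_index)
  done


lemma n_assoc: "dim_col A = dim_row B \<Longrightarrow> dim_col B = dim_row C \<Longrightarrow> A*(B*C) = A*B*(C::'a::comm_ring_1 mat)"
  by (rule assoc_mult_mat[symmetric], auto)
lemma n_distL: "dim_col A = dim_row B \<Longrightarrow> dim_row B = dim_row C \<Longrightarrow> dim_col B = dim_col C \<Longrightarrow> A*(B+C) = A*B + A*(C::'a::comm_ring_1 mat)"
  by (rule mult_add_distrib_mat, auto)
lemma n_distR: "dim_row A = dim_row B \<Longrightarrow> dim_col A = dim_col B \<Longrightarrow> dim_col B = dim_row C \<Longrightarrow> (A+B)*C = A*C + B*(C::'a::comm_ring_1 mat)"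
  by (rule add_mult_distrib_mat, auto)
lemma n_minus: "dim_row A = dim_row B \<Longrightarrow> dim_col A = dim_col B \<Longrightarrow> A - B = A + - (B::'a::comm_ring_1 mat)"
  by (rule eq_matI, auto)
lemma n_uminus_add: "dim_row A = dim_row B \<Longrightarrow> dim_col A = dim_col B \<Longrightarrow> - (A + B) = - A + - (B::'a::comm_ring_1 mat)"
  by (rule eq_matI, auto)
lemma n_one_r: "dim_col A = n \<Longrightarrow> A * 1\<^sub>m n = (A::'a::comm_ring_1 mat)"
  by (rule right_mult_one_mat, auto)
lemma n_one_l: "dim_row A = n \<Longrightarrow> 1\<^sub>m n * A = (A::'a::comm_ring_1 mat)"
  by (rule left_mult_one_mat, auto)

lemmas nrm0 = n_assoc n_distL n_distR n_minus n_uminus_add n_one_r n_one_l adj_add adj_mult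

lemma ric:
  fixes A B C Z h H :: "complex mat"
  assumes A: "A \<in> carrier_mat n n" and B: "B \<in> carrier_mat n m" and C: "C \<in> carrier_mat p n"
    and Z: "Z \<in> carrier_mat n r" and h: "h \<in> carrier_mat p r" and H: "H \<in> carrier_mat r r"
    and eqZ: "mat_adjoint A * Z = mat_adjoint C * h + Z * H"
    and eqH: "0\<^sub>m r r = H + mat_adjoint H - (mat_adjoint Z * B * mat_adjoint B * Z + mat_adjoint h * h)"
  shows "riccati_res A B C (Z * mat_adjoint Z) = (mat_adjoint C + Z * mat_adjoint h) * mat_adjoint (mat_adjoint C + Z * mat_adjoint h)"
proof -
  have d[simp]: "dim_row A = n" "dim_col A = n" "dim_row B = n" "dim_col B = m" "dim_row C = p" "dim_col C = n"
    "dim_row Z = n" "dim_col Z = r" "dim_row h = p" "dim_col h = r" "dim_row H = r" "dim_col H = r"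
    using A B C Z h H by auto
  have aH: "mat_adjoint H = mat_adjoint Z * B * mat_adjoint B * Z + mat_adjoint h * h - H"
  proof (rule eq_matI)
    fix i j assume ij: "i < dim_row (mat_adjoint Z * B * mat_adjoint B * Z + mat_adjoint h * h - H)"
         "j < dim_col (mat_adjoint Z * B * mat_adjoint B * Z + mat_adjoint h * h - H)"
    have "0\<^sub>m r r $$ (i,j) = (H + mat_adjoint H - (mat_adjoint Z * B * mat_adjoint B * Z + mat_adjoint h * h)) $$ (i,j)"
      using eqH by simp
    thus "mat_adjoint H $$ (i,j) = (mat_adjoint Z * B * mat_adjoint B * Z + mat_adjoint h * h - H) $$ (i,j)"
      using ij by (simp del: index_mult_mat(1) add: algebra_simps)
  qed auto
  have e1: "mat_adjoint A * Z * mat_adjoint Z = (mat_adjoint C * h + Z * H) * mat_adjoint Z"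
    using eqZ by simp
  have e2: "mat_adjoint Z * A = mat_adjoint h * C + mat_adjoint H * mat_adjoint Z"
    using arg_cong[OF eqZ, of mat_adjoint] by (simp del: assoc_mult_mat add: nrm0)
  have e3: "Z * mat_adjoint Z * A = Z * (mat_adjoint h * C + (mat_adjoint Z * B * mat_adjoint B * Z + mat_adjoint h * h - H) * mat_adjoint Z)"
  proof -
    have "Z * mat_adjoint Z * A = Z * (mat_adjoint Z * A)" by (rule assoc_mult_mat[where n\<^sub>1=n and n\<^sub>2=r and n\<^sub>3=n and n\<^sub>4=n], auto simp: Z A)
    also have "\<dots> = Z * (mat_adjoint h * C + mat_adjoint H * mat_adjoint Z)" using e2 by simp
    finally show ?thesis using aH by simp
  qed
  show ?thesis
    unfolding riccati_res_def
    apply (simp del: assoc_mult_mat add: nrm0 e1[simplified nrm0] e3[simplified nrm0])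
    apply (rule eq_matI)
      apply (simp_all del: index_mult_mat(1) add: algebra_simps)
    done
qed

lemma n_zero_r: "dim_col A = r \<Longrightarrow> (A::'a::comm_ring_1 mat) * 0\<^sub>m r c = 0\<^sub>m (dim_row A) c"
  by (rule eq_matI, auto simp: scalar_prod_def)
lemma n_zero_l: "dim_row A = r \<Longrightarrow> 0\<^sub>m c r * (A::'a::comm_ring_1 mat) = 0\<^sub>m c (dim_col A)"
  by (rule eq_matI, auto simp: scalar_prod_def)


lemma hcat_dims[simp]: "dim_row (hcat X Y) = dim_row X" "dim_col (hcat X Y) = dim_col X + dim_col Y"
  unfolding hcat_def by auto

lemma hcat_index: "i < dim_row X \<Longrightarrow> j < dim_col X + dim_col Y \<Longrightarrow>
  hcat X Y $$ (i,j) = (if j < dim_col X then X $$ (i,j) else Y $$ (i, j - dim_col X))"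
  unfolding hcat_def by auto

definition vcat0 :: "'a::zero mat \<Rightarrow> 'a mat \<Rightarrow> 'a mat" where
  "vcat0 P Q = four_block_mat P (0\<^sub>m (dim_row P) 0) Q (0\<^sub>m (dim_row Q) 0)"

lemmas nrm = nrm0 n_zero_r n_zero_l

lemma h_mult_l: "dim_col M = dim_row X \<Longrightarrow> dim_row X = dim_row Y \<Longrightarrow>
  M * hcat X Y = hcat (M*X) (M*(Y::'a::comm_ring_1 mat))"
  apply (rule eq_matI)
    apply (auto simp: hcat_index scalar_prod_def)
  done

lemma h_add: "dim_row X = dim_row X' \<Longrightarrow> dim_col X = dim_col X' \<Longrightarrow> dim_row Y = dim_row Y' \<Longrightarrow> dim_col Y = dim_col Y' \<Longrightarrow>
   dim_row X = dim_row Y \<Longrightarrow>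
  hcat X Y + hcat X' Y' = hcat (X+X') (Y+(Y'::'a::comm_ring_1 mat))"
  by (rule eq_matI, auto simp: hcat_index)

lemma h_mult_four: assumes "X \<in> carrier_mat n a" "Y \<in> carrier_mat n b" "P \<in> carrier_mat a c" "Q \<in> carrier_mat a d"
  "R \<in> carrier_mat b c" "S \<in> carrier_mat b d"
  shows "hcat X Y * four_block_mat P Q R S = hcat (X*P + Y*R) (X*Q + (Y*S::'a::comm_ring_1 mat))"
proof -
  have e: "hcat X Y = four_block_mat X Y (0\<^sub>m 0 a) (0\<^sub>m 0 b)" using assms by (simp add: hcat_def)
  show ?thesis unfolding e
  apply (subst mult_four_block_mat[OF assms(1,2) zero_carrier_mat[of 0 a] zero_carrier_mat[of 0 b] assms(3-6)])
  using assms by (auto simp: hcat_def)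
qed

lemma h_v: assumes "X \<in> carrier_mat n a" "Y \<in> carrier_mat n b" "P \<in> carrier_mat a c" "Q \<in> carrier_mat b c"
  shows "hcat X Y * vcat0 P Q = X*P + (Y*Q::'a::comm_ring_1 mat)"
proof -
  have e: "hcat X Y = four_block_mat X Y (0\<^sub>m 0 a) (0\<^sub>m 0 b)" using assms by (simp add: hcat_def)
  have f: "vcat0 P Q = four_block_mat P (0\<^sub>m a 0) Q (0\<^sub>m b 0)" using assms by (simp add: vcat0_def)
  show ?thesis unfolding e f
  apply (subst mult_four_block_mat[OF assms(1,2) zero_carrier_mat[of 0 a] zero_carrier_mat[of 0 b] assms(3) _ assms(4)])
  using assms by auto
qed


lemma vcat_dims[simp]: "dim_row (vcat0 P Q) = dim_row P + dim_row Q" "dim_col (vcat0 P Q) = dim_col P"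
  unfolding vcat0_def by auto

lemma vcat_index: "i < dim_row P + dim_row Q \<Longrightarrow> j < dim_col P \<Longrightarrow>
  vcat0 P Q $$ (i,j) = (if i < dim_row P then P $$ (i,j) else Q $$ (i - dim_row P, j))"
  unfolding vcat0_def by auto

lemma adj_hcat: "dim_row X = dim_row (Y::complex mat) \<Longrightarrow> mat_adjoint (hcat X Y) = vcat0 (mat_adjoint X) (mat_adjoint Y)"
  by (rule eq_matI, auto simp: hcat_index vcat_index adj_index)

lemma v_mult: "dim_col P = dim_col Q \<Longrightarrow> dim_col Q = dim_row M \<Longrightarrow>
  vcat0 P Q * M = vcat0 (P*M) (Q*(M::'a::comm_ring_1 mat))"
  apply (rule eq_matI)
    apply (auto simp: vcat_index scalar_prod_def)
  done

lemma v_h: "dim_col P = dim_col Q \<Longrightarrow> dim_col Q = dim_row X \<Longrightarrow> dim_row X = dim_row Y \<Longrightarrow>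
  vcat0 P Q * hcat X Y = four_block_mat (P*X) (P*Y) (Q*X) (Q*(Y::'a::comm_ring_1 mat))"
  apply (rule eq_matI)
    apply (auto simp: vcat_index hcat_index scalar_prod_def)
  done

lemma v_hh: "dim_row a = dim_row b \<Longrightarrow> dim_row c = dim_row d \<Longrightarrow> dim_col a = dim_col c \<Longrightarrow> dim_col b = dim_col d \<Longrightarrow>
  vcat0 (hcat a b) (hcat c d) = four_block_mat a b c (d::'a::comm_ring_1 mat)"
  by (rule eq_matI, auto simp: vcat_index hcat_index)

lemma h_vv: "dim_row a = dim_row b \<Longrightarrow> dim_row c = dim_row d \<Longrightarrow> dim_col a = dim_col c \<Longrightarrow> dim_col b = dim_col d \<Longrightarrow>
  hcat (vcat0 a c) (vcat0 b d) = four_block_mat a b c (d::'a::comm_ring_1 mat)"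
  by (rule eq_matI, auto simp: vcat_index hcat_index)

lemma h_adj: "dim_row X = dim_row Y \<Longrightarrow> dim_row X' = dim_row Y' \<Longrightarrow> dim_col X = dim_col X' \<Longrightarrow> dim_col Y = dim_col Y' \<Longrightarrow>
  hcat X Y * mat_adjoint (hcat X' Y') = X * mat_adjoint X' + Y * mat_adjoint (Y'::complex mat)"
  apply (subst adj_hcat, simp)
  apply (rule h_v[where n="dim_row X" and a="dim_col X" and b="dim_col Y" and c="dim_row X'"])
  by auto

lemma adj_four: "dim_row P = dim_row Q \<Longrightarrow> dim_col P = dim_col R \<Longrightarrow> dim_row R = dim_row S \<Longrightarrow> dim_col Q = dim_col S \<Longrightarrow>
  mat_adjoint (four_block_mat P Q R S) = four_block_mat (mat_adjoint P) (mat_adjoint R) (mat_adjoint Q) (mat_adjoint (S::complex mat))"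
  by (rule eq_matI, auto simp: adj_index)

lemma four_add: "dim_row P = dim_row Q \<Longrightarrow> dim_col P = dim_col R \<Longrightarrow> dim_row R = dim_row S \<Longrightarrow> dim_col Q = dim_col S \<Longrightarrow>
  dim_row P = dim_row P' \<Longrightarrow> dim_col P = dim_col P' \<Longrightarrow> dim_row Q = dim_row Q' \<Longrightarrow> dim_col Q = dim_col Q' \<Longrightarrow>
  dim_row R = dim_row R' \<Longrightarrow> dim_col R = dim_col R' \<Longrightarrow> dim_row S = dim_row S' \<Longrightarrow> dim_col S = dim_col S' \<Longrightarrow>
  four_block_mat P Q R S + four_block_mat P' Q' R' S' = four_block_mat (P+P') (Q+Q') (R+R') (S+(S'::'a::comm_ring_1 mat))"
  by (rule eq_matI, auto)

lemma four_minus: "dim_row P = dim_row Q \<Longrightarrow> dim_col P = dim_col R \<Longrightarrow> dim_row R = dim_row S \<Longrightarrow> dim_col Q = dim_col S \<Longrightarrow>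
  dim_row P = dim_row P' \<Longrightarrow> dim_col P = dim_col P' \<Longrightarrow> dim_row Q = dim_row Q' \<Longrightarrow> dim_col Q = dim_col Q' \<Longrightarrow>
  dim_row R = dim_row R' \<Longrightarrow> dim_col R = dim_col R' \<Longrightarrow> dim_row S = dim_row S' \<Longrightarrow> dim_col S = dim_col S' \<Longrightarrow>
  four_block_mat P Q R S - four_block_mat P' Q' R' S' = four_block_mat (P-P') (Q-Q') (R-R') (S-(S'::'a::comm_ring_1 mat))"
  by (rule eq_matI, auto)




theorem mainTheorem10:
  fixes n m p N k :: nat
    and A B C Zj hj Hj Zt U1 U2 D Y12 Y22 G22 G22inv :: "complex mat"
  assumes A: "A \<in> carrier_mat n n" and B: "B \<in> carrier_mat n m" and C: "C \<in> carrier_mat p n"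
    and Zj: "Zj \<in> carrier_mat n N" and hj: "hj \<in> carrier_mat p N" and Hj: "Hj \<in> carrier_mat N N"
    and eqZ: "mat_adjoint A * Zj = mat_adjoint C * hj + Zj * Hj"
    and eqH: "0\<^sub>m N N = Hj + mat_adjoint Hj - (mat_adjoint Zj * B * mat_adjoint B * Zj + mat_adjoint hj * hj)"
    and Zt: "Zt \<in> carrier_mat n k" and U1: "U1 \<in> carrier_mat p k" and D: "D \<in> carrier_mat k k"
    and U2: "U2 = mat_adjoint hj * U1"
    and eqZt: "mat_adjoint A * Zt = mat_adjoint C * U1 + Zj * U2 + Zt * D"
    and Y12: "Y12 \<in> carrier_mat N k"
    and eqY12: "Y12 * D + mat_adjoint Hj * Y12 - mat_adjoint Zj * B * mat_adjoint B * Zt = 0\<^sub>m N k"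
    and Y22: "Y22 \<in> carrier_mat k k" and Y22herm: "mat_adjoint Y22 = Y22"
    and eqY22: "0\<^sub>m k k = mat_adjoint Y12 * U2 + Y22 * D + mat_adjoint U2 * Y12 + mat_adjoint D * Y22
                  - mat_adjoint Zt * B * mat_adjoint B * Zt - mat_adjoint U1 * U1"
    and posdef: "pos_def_mat (Y22 - mat_adjoint Y12 * Y12)"
    and chol: "cholesky_factor G22 (Y22 - mat_adjoint Y12 * Y12)"
    and G22inv: "G22inv \<in> carrier_mat k k" "G22 * G22inv = 1\<^sub>m k" "G22inv * G22 = 1\<^sub>m k"
  shows
    "let Rj = mat_adjoint C + Zj * mat_adjoint hj;
         U1h = (- (hj * Y12) + U1) * G22inv;
         U2h = (- (Hj * Y12) + U2 + Y12 * D) * G22inv;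
         Dh = G22 * D * G22inv;
         Zh = (- (Zj * Y12) + Zt) * G22inv;
         Zj1 = hcat Zj Zh;
         hj1 = hcat hj U1h;
         Hj1 = four_block_mat Hj U2h (0\<^sub>m k N) Dh;
         Rj1 = mat_adjoint C + Zj1 * mat_adjoint hj1
     in mat_adjoint A * Zj1 = mat_adjoint C * hj1 + Zj1 * Hj1
      \<and> 0\<^sub>m (N + k) (N + k) = Hj1 + mat_adjoint Hj1 - (mat_adjoint Zj1 * B * mat_adjoint B * Zj1 + mat_adjoint hj1 * hj1)
      \<and> Rj1 = Rj + Zh * mat_adjoint U1h
      \<and> riccati_res A B C (Zj1 * mat_adjoint Zj1) = Rj1 * mat_adjoint Rj1"
  proof -
  note adjdef = mat_adjoint_def
  have Gc: "G22 \<in> carrier_mat k k" using chol Y12 unfolding cholesky_factor_def by auto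
  have d[simp]: "dim_row A = n" "dim_col A = n" "dim_row B = n" "dim_col B = m" "dim_row C = p" "dim_col C = n"
    "dim_row Zj = n" "dim_col Zj = N" "dim_row hj = p" "dim_col hj = N" "dim_row Hj = N" "dim_col Hj = N"
    "dim_row Zt = n" "dim_col Zt = k" "dim_row U1 = p" "dim_col U1 = k" "dim_row D = k" "dim_col D = k"
    "dim_row Y12 = N" "dim_col Y12 = k" "dim_row Y22 = k" "dim_col Y22 = k"
    "dim_row G22 = k" "dim_col G22 = k" "dim_row G22inv = k" "dim_col G22inv = k"
    using A B C Zj hj Hj Zt U1 D Y12 Y22 Gc G22inv by auto
  have GiG: "\<And>X. dim_col X = k \<Longrightarrow> X * G22inv * G22 = X"
  proof -
    fix X :: "complex mat" assume "dim_col X = k"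
    hence "X * G22inv * G22 = X * (G22inv * G22)" by (simp del: assoc_mult_mat add: n_assoc)
    thus "X * G22inv * G22 = X" using G22inv `dim_col X = k` by (simp add: n_one_r)
  qed
  have GGi: "\<And>X. dim_col X = k \<Longrightarrow> X * G22 * G22inv = X"
  proof -
    fix X :: "complex mat" assume "dim_col X = k"
    hence "X * G22 * G22inv = X * (G22 * G22inv)" by (simp del: assoc_mult_mat add: n_assoc)
    thus "X * G22 * G22inv = X" using G22inv `dim_col X = k` by (simp add: n_one_r)
  qed
  define S1 where "S1 = - (hj * Y12) + U1"
  define S2 where "S2 = - (Hj * Y12) + U2 + Y12 * D"
  define T where "T = - (Zj * Y12) + Zt"
  define U1h where "U1h = S1 * G22inv"
  define U2h where "U2h = S2 * G22inv"
  define Dh where "Dh = G22 * D * G22inv"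
  define Zh where "Zh = T * G22inv"
  define Zj1 where "Zj1 = hcat Zj Zh"
  define hj1 where "hj1 = hcat hj U1h"
  define Hj1 where "Hj1 = four_block_mat Hj U2h (0\<^sub>m k N) Dh"
  have d2[simp]: "dim_row U2 = N" "dim_col U2 = k" using U2 by auto
  have d3[simp]: "dim_row S1 = p" "dim_col S1 = k" "dim_row S2 = N" "dim_col S2 = k" "dim_row T = n" "dim_col T = k"
    "dim_row U1h = p" "dim_col U1h = k" "dim_row U2h = N" "dim_col U2h = k" "dim_row Dh = k" "dim_col Dh = k"
    "dim_row Zh = n" "dim_col Zh = k"
    unfolding S1_def S2_def T_def U1h_def U2h_def Dh_def Zh_def by auto
  have cZh: "Zh \<in> carrier_mat n k" "U2h \<in> carrier_mat N k" "Dh \<in> carrier_mat k k"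
    "U1h \<in> carrier_mat p k" "T \<in> carrier_mat n k" "S1 \<in> carrier_mat p k" "S2 \<in> carrier_mat N k"
    unfolding carrier_mat_def by simp_all
  have key1: "mat_adjoint A * Zh = mat_adjoint C * U1h + (Zj * U2h + Zh * Dh)"
    unfolding Zh_def U1h_def U2h_def Dh_def T_def S1_def S2_def
    apply (simp del: assoc_mult_mat add: nrm eqZ eqZt GiG)
    apply (rule eq_matI)
      apply (simp_all del: index_mult_mat(1) add: algebra_simps)
    done
  have c1: "mat_adjoint A * Zj1 = mat_adjoint C * hj1 + Zj1 * Hj1"
  proof -
    have e1: "mat_adjoint A * Zj1 = hcat (mat_adjoint A * Zj) (mat_adjoint A * Zh)"
      unfolding Zj1_def by (rule h_mult_l; simp)
    have e2: "mat_adjoint C * hj1 = hcat (mat_adjoint C * hj) (mat_adjoint C * U1h)"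
      unfolding hj1_def by (rule h_mult_l; simp)
    have e3: "Zj1 * Hj1 = hcat (Zj * Hj + Zh * 0\<^sub>m k N) (Zj * U2h + Zh * Dh)"
      unfolding Zj1_def Hj1_def by (rule h_mult_four[OF Zj cZh(1) Hj cZh(2) zero_carrier_mat cZh(3)])
    have e4: "Zh * 0\<^sub>m k N = 0\<^sub>m n N" by (simp add: n_zero_r)
    have e5: "Zj * Hj + 0\<^sub>m n N = Zj * Hj" by (rule eq_matI, auto)
    show ?thesis unfolding e1 e2 e3 e4 e5
      by (subst h_add; simp add: eqZ key1)
  qed
  have blk: "Hj1 + mat_adjoint Hj1 - (mat_adjoint Zj1 * B * mat_adjoint B * Zj1 + mat_adjoint hj1 * hj1)
    = four_block_mat (Hj + mat_adjoint Hj - (mat_adjoint Zj * B * mat_adjoint B * Zj + mat_adjoint hj * hj))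
        (U2h + 0\<^sub>m N k - (mat_adjoint Zj * B * mat_adjoint B * Zh + mat_adjoint hj * U1h))
        (0\<^sub>m k N + mat_adjoint U2h - (mat_adjoint Zh * B * mat_adjoint B * Zj + mat_adjoint U1h * hj))
        (Dh + mat_adjoint Dh - (mat_adjoint Zh * B * mat_adjoint B * Zh + mat_adjoint U1h * U1h))"
    unfolding Zj1_def hj1_def Hj1_def
    by (simp del: assoc_mult_mat add: adj_hcat v_mult h_mult_l v_hh h_vv adj_four four_add four_minus)
  have b11: "Hj + mat_adjoint Hj - (mat_adjoint Zj * B * mat_adjoint B * Zj + mat_adjoint hj * hj) = 0\<^sub>m N N"
    using eqH by simp
  have W1: "mat_adjoint Zj * B * mat_adjoint B * Zj = Hj + mat_adjoint Hj - mat_adjoint hj * hj"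
  proof (rule eq_matI)
    fix i j assume ij: "i < dim_row (Hj + mat_adjoint Hj - mat_adjoint hj * hj)" "j < dim_col (Hj + mat_adjoint Hj - mat_adjoint hj * hj)"
    have "0\<^sub>m N N $$ (i,j) = (Hj + mat_adjoint Hj - (mat_adjoint Zj * B * mat_adjoint B * Zj + mat_adjoint hj * hj)) $$ (i,j)"
      using eqH by simp
    thus "(mat_adjoint Zj * B * mat_adjoint B * Zj) $$ (i,j) = (Hj + mat_adjoint Hj - mat_adjoint hj * hj) $$ (i,j)"
      using ij by (simp del: index_mult_mat(1) add: algebra_simps)
  qed simp_all
  have W2: "mat_adjoint Zj * B * mat_adjoint B * Zt = Y12 * D + mat_adjoint Hj * Y12"
  proof (rule eq_matI)
    fix i j assume ij: "i < dim_row (Y12 * D + mat_adjoint Hj * Y12)" "j < dim_col (Y12 * D + mat_adjoint Hj * Y12)"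
    have "0\<^sub>m N k $$ (i,j) = (Y12 * D + mat_adjoint Hj * Y12 - mat_adjoint Zj * B * mat_adjoint B * Zt) $$ (i,j)"
      using eqY12 by simp
    thus "(mat_adjoint Zj * B * mat_adjoint B * Zt) $$ (i,j) = (Y12 * D + mat_adjoint Hj * Y12) $$ (i,j)"
      using ij by (simp del: index_mult_mat(1) add: algebra_simps)
  qed simp_all
  have W3: "mat_adjoint Zt * B * mat_adjoint B * Zj = mat_adjoint D * mat_adjoint Y12 + mat_adjoint Y12 * Hj"
    using arg_cong[OF W2, of mat_adjoint] by (simp del: assoc_mult_mat add: nrm)
  have W4: "Y22 * D = mat_adjoint Zt * B * mat_adjoint B * Zt + mat_adjoint U1 * U1 - mat_adjoint Y12 * U2 - mat_adjoint U2 * Y12 - mat_adjoint D * Y22"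
  proof (rule eq_matI)
    fix i j assume ij: "i < dim_row (mat_adjoint Zt * B * mat_adjoint B * Zt + mat_adjoint U1 * U1 - mat_adjoint Y12 * U2 - mat_adjoint U2 * Y12 - mat_adjoint D * Y22)"
      "j < dim_col (mat_adjoint Zt * B * mat_adjoint B * Zt + mat_adjoint U1 * U1 - mat_adjoint Y12 * U2 - mat_adjoint U2 * Y12 - mat_adjoint D * Y22)"
    have "0\<^sub>m k k $$ (i,j) = (mat_adjoint Y12 * U2 + Y22 * D + mat_adjoint U2 * Y12 + mat_adjoint D * Y22
                  - mat_adjoint Zt * B * mat_adjoint B * Zt - mat_adjoint U1 * U1) $$ (i,j)"
      using eqY22 by simp
    thus "(Y22 * D) $$ (i,j) = (mat_adjoint Zt * B * mat_adjoint B * Zt + mat_adjoint U1 * U1 - mat_adjoint Y12 * U2 - mat_adjoint U2 * Y12 - mat_adjoint D * Y22) $$ (i,j)"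
      using ij by (simp del: index_mult_mat(1) add: algebra_simps)
  qed simp_all
  have CH: "mat_adjoint G22 * G22 = Y22 - mat_adjoint Y12 * Y12"
    using chol unfolding cholesky_factor_def by simp
  have AG: "mat_adjoint G22inv * mat_adjoint G22 = 1\<^sub>m k"
    using arg_cong[OF G22inv(2), of mat_adjoint] by (simp add: adj_mult)
  have W1x: "\<And>X. dim_col X = N \<Longrightarrow> X * mat_adjoint Zj * B * mat_adjoint B * Zj = X * (Hj + mat_adjoint Hj - mat_adjoint hj * hj)"
  proof -
    fix X :: "complex mat" assume "dim_col X = N"
    hence "X * (mat_adjoint Zj * B * mat_adjoint B * Zj) = X * (Hj + mat_adjoint Hj - mat_adjoint hj * hj)" using W1 by simp
    thus "X * mat_adjoint Zj * B * mat_adjoint B * Zj = X * (Hj + mat_adjoint Hj - mat_adjoint hj * hj)" using `dim_col X = N`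
      by (simp del: assoc_mult_mat add: n_assoc)
  qed
  have W2x: "\<And>X. dim_col X = N \<Longrightarrow> X * mat_adjoint Zj * B * mat_adjoint B * Zt = X * (Y12 * D + mat_adjoint Hj * Y12)"
  proof -
    fix X :: "complex mat" assume "dim_col X = N"
    hence "X * (mat_adjoint Zj * B * mat_adjoint B * Zt) = X * (Y12 * D + mat_adjoint Hj * Y12)" using W2 by simp
    thus "X * mat_adjoint Zj * B * mat_adjoint B * Zt = X * (Y12 * D + mat_adjoint Hj * Y12)" using `dim_col X = N`
      by (simp del: assoc_mult_mat add: n_assoc)
  qed
  have W3x: "\<And>X. dim_col X = k \<Longrightarrow> X * mat_adjoint Zt * B * mat_adjoint B * Zj = X * (mat_adjoint D * mat_adjoint Y12 + mat_adjoint Y12 * Hj)"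
  proof -
    fix X :: "complex mat" assume "dim_col X = k"
    hence "X * (mat_adjoint Zt * B * mat_adjoint B * Zj) = X * (mat_adjoint D * mat_adjoint Y12 + mat_adjoint Y12 * Hj)" using W3 by simp
    thus "X * mat_adjoint Zt * B * mat_adjoint B * Zj = X * (mat_adjoint D * mat_adjoint Y12 + mat_adjoint Y12 * Hj)" using `dim_col X = k`
      by (simp del: assoc_mult_mat add: n_assoc)
  qed
  have CHx: "\<And>X. dim_col X = k \<Longrightarrow> X * mat_adjoint G22 * G22 = X * (Y22 - mat_adjoint Y12 * Y12)"
  proof -
    fix X :: "complex mat" assume "dim_col X = k"
    hence "X * (mat_adjoint G22 * G22) = X * (Y22 - mat_adjoint Y12 * Y12)" using CH by simp
    thus "X * mat_adjoint G22 * G22 = X * (Y22 - mat_adjoint Y12 * Y12)" using `dim_col X = k`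
      by (simp del: assoc_mult_mat add: n_assoc)
  qed
  have b12: "U2h + 0\<^sub>m N k - (mat_adjoint Zj * B * mat_adjoint B * Zh + mat_adjoint hj * U1h) = 0\<^sub>m N k"
    unfolding U2h_def Zh_def U1h_def S1_def S2_def T_def U2
    apply (simp del: assoc_mult_mat add: nrm W1 W2)
    apply (rule eq_matI)
      apply (simp_all del: index_mult_mat(1) add: algebra_simps)
    done
  have b21: "0\<^sub>m k N + mat_adjoint U2h - (mat_adjoint Zh * B * mat_adjoint B * Zj + mat_adjoint U1h * hj) = 0\<^sub>m k N"
    unfolding U2h_def Zh_def U1h_def S1_def S2_def T_def U2
    apply (simp del: assoc_mult_mat add: nrm W1x W3x)
    apply (rule eq_matI)
      apply (simp_all del: index_mult_mat(1) add: algebra_simps)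
    done
  have L22: "Dh + mat_adjoint Dh - (mat_adjoint Zh * B * mat_adjoint B * Zh + mat_adjoint U1h * U1h)
     = mat_adjoint G22inv * (mat_adjoint G22 * G22 * D + mat_adjoint D * mat_adjoint G22 * G22 - mat_adjoint T * B * mat_adjoint B * T - mat_adjoint S1 * S1) * G22inv"
    unfolding Dh_def Zh_def U1h_def
    apply (simp del: assoc_mult_mat add: nrm AG GGi)
    apply (rule eq_matI)
      apply (simp_all del: index_mult_mat(1) add: algebra_simps)
    done
  have X0: "mat_adjoint G22 * G22 * D + mat_adjoint D * mat_adjoint G22 * G22 - mat_adjoint T * B * mat_adjoint B * T - mat_adjoint S1 * S1 = 0\<^sub>m k k"
    unfolding S1_def T_def U2
    apply (simp del: assoc_mult_mat add: nrm CH CHx W1x W2x W3 W4[unfolded U2])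
    apply (rule eq_matI)
      apply (simp_all del: index_mult_mat(1) add: algebra_simps)
    done
  have b22: "Dh + mat_adjoint Dh - (mat_adjoint Zh * B * mat_adjoint B * Zh + mat_adjoint U1h * U1h) = 0\<^sub>m k k"
    unfolding L22 X0 by (simp add: n_zero_r n_zero_l)
  have c2: "0\<^sub>m (N + k) (N + k) = Hj1 + mat_adjoint Hj1 - (mat_adjoint Zj1 * B * mat_adjoint B * Zj1 + mat_adjoint hj1 * hj1)"
    unfolding blk b11 b12 b21 b22 by simp
  have c3: "mat_adjoint C + Zj1 * mat_adjoint hj1 = (mat_adjoint C + Zj * mat_adjoint hj) + Zh * mat_adjoint U1h"
    unfolding Zj1_def hj1_def
    apply (subst h_adj)
        apply simp_all
    by (rule eq_matI) (simp_all del: index_mult_mat(1))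
  have c4: "riccati_res A B C (Zj1 * mat_adjoint Zj1) = (mat_adjoint C + Zj1 * mat_adjoint hj1) * mat_adjoint (mat_adjoint C + Zj1 * mat_adjoint hj1)"
  proof (rule ric[OF A B C _ _ _ c1 c2])
    show "Zj1 \<in> carrier_mat n (N+k)" unfolding Zj1_def carrier_mat_def by simp
    show "hj1 \<in> carrier_mat p (N+k)" unfolding hj1_def carrier_mat_def by simp
    show "Hj1 \<in> carrier_mat (N+k) (N+k)" unfolding Hj1_def carrier_mat_def by simp
  qed
  show ?thesis
    unfolding Let_def S1_def[symmetric] S2_def[symmetric] T_def[symmetric]
    unfolding U1h_def[symmetric] U2h_def[symmetric] Dh_def[symmetric] Zh_def[symmetric]
    unfolding Zj1_def[symmetric] hj1_def[symmetric] Hj1_def[symmetric]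
    using c1 c2 c3 c4 by blast
qed


end
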